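(* Let $A$ be a real $n\times n$ matrix with strictly negative diagonal entries such that all $2\times2$ and all $3\times3$ principal minors of $A$ vanish. Then $G_A$ is the complete graph, $A$ is a bipartite matrix, and $\operatorname{rank}A=1$.
   Context: The connectivity graph $G_A$ is the simple graph on $\{1,\dots,n\}$ containing edge $(ij)$, $i\ne j$, unless $A_{ij}=A_{ji}=0$. A principal minor is the determinant of a principal submatrix $A_\sigma$ (rows and columns indexed by $\sigma$). A real $n\times n$ matrix $A$ is bipartite if $\{1,\dots,n\}$ can be partitioned into disjoint sets $\sigma,\bar\sigma$ such that: if $i\in\sigma,j\in\bar\sigma$ then $A_{ij}\ge0$ and $A_{ji}\ge0$; and if $i,j\in\sigma$ or $i,j\in\bar\sigma$ then $A_{ij}\le0$ and $A_{ji}\le0$. *)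

theory Defs
  imports "HOL-Analysis.Analysis"
begin

definition principal_minor :: "real^'n^'n \<Rightarrow> 'n set \<Rightarrow> real" where
  "principal_minor A \<sigma> =
     (\<Sum>p | p permutes \<sigma>. of_int (sign p) * (\<Prod>i\<in>\<sigma>. A $ i $ p i))"

definition conn_edge :: "real^'n^'n \<Rightarrow> 'n \<Rightarrow> 'n \<Rightarrow> bool" where
  "conn_edge A i j \<longleftrightarrow> i \<noteq> j \<and> \<not> (A $ i $ j = 0 \<and> A $ j $ i = 0)"

definition conn_graph_complete :: "real^'n^'n \<Rightarrow> bool" where
  "conn_graph_complete A \<longleftrightarrow> (\<forall>i j. i \<noteq> j \<longrightarrow> conn_edge A i j)"

definition bipartite_matrix :: "real^'n^'n \<Rightarrow> bool" where
  "bipartite_matrix A \<longleftrightarrow> (\<exists>\<sigma>::'n set.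
     (\<forall>i j. i \<in> \<sigma> \<and> j \<notin> \<sigma> \<longrightarrow> A $ i $ j \<ge> 0 \<and> A $ j $ i \<ge> 0) \<and>
     (\<forall>i j. (i \<in> \<sigma> \<longleftrightarrow> j \<in> \<sigma>) \<longrightarrow> A $ i $ j \<le> 0 \<and> A $ j $ i \<le> 0))"

end

theory Submission
  imports Defs
begin

lemma pm2:
  fixes A :: "real^'n^'n"
  assumes "i \<noteq> j"
  shows "principal_minor A {i,j} = A$i$i * A$j$j - A$i$j * A$j$i"
proof -
  have f: "finite {j}" "i \<notin> {j}" using assms by auto
  show ?thesis
    unfolding principal_minor_def
    unfolding sum_over_permutations_insert[OF f]
    unfolding permutes_sing
    using assms by (simp add: sign_swap_id sign_id swap_id_eq)
qed

lemma pm3: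
  fixes A :: "real^'n^'n"
  assumes "i \<noteq> j" "i \<noteq> k" "j \<noteq> k"
  shows "principal_minor A {i,j,k} =
    A$i$i * A$j$j * A$k$k + A$i$j * A$j$k * A$k$i + A$i$k * A$j$i * A$k$j
    - A$i$i * A$j$k * A$k$j - A$i$j * A$j$i * A$k$k - A$i$k * A$j$j * A$k$i"
proof -
  have f1: "finite {j,k}" "i \<notin> {j,k}" using assms by auto
  have f2: "finite {k}" "j \<notin> {k}" using assms by auto
  show ?thesis
    unfolding principal_minor_def
    unfolding sum_over_permutations_insert[OF f1]
    unfolding sum_over_permutations_insert[OF f2]
    unfolding permutes_sing
    using assms by (simp add: sign_swap_id permutation_swap_id sign_compose sign_id swap_id_eq
        transpose_def algebra_simps)
qed

theorem mainTheorem10: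
  fixes A :: "real^'n^'n"
  assumes diag: "\<And>i. A $ i $ i < 0"
    and minors2: "\<And>\<sigma>. card \<sigma> = 2 \<Longrightarrow> principal_minor A \<sigma> = 0"
    and minors3: "\<And>\<sigma>. card \<sigma> = 3 \<Longrightarrow> principal_minor A \<sigma> = 0"
  shows "conn_graph_complete A \<and> bipartite_matrix A \<and> rank A = 1"
proof -
  have h2: "A$i$j * A$j$i = A$i$i * A$j$j" if "i \<noteq> j" for i j
    using minors2[of "{i,j}"] pm2[OF that, of A] that by simp
  have h3: "A$i$j * A$j$k * A$k$i = A$i$i * A$j$j * A$k$k"
    if "i \<noteq> j" "i \<noteq> k" "j \<noteq> k" for i j k
  proof -
    define x where "x = A$i$j * A$j$k * A$k$i"
    define y where "y = A$i$k * A$j$i * A$k$j"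
    define D where "D = A$i$i * A$j$j * A$k$k"
    have c: "card {i,j,k} = 3" using that by simp
    have s: "x + y = 2 * D"
      using minors3[OF c] pm3[OF that, of A] h2[OF that(1)] h2[OF that(2)] h2[OF that(3)]
      unfolding x_def y_def D_def by (simp add: algebra_simps)
    have p: "x * y = D * D"
    proof -
      have "x * y = (A$i$j * A$j$i) * (A$j$k * A$k$j) * (A$i$k * A$k$i)"
        unfolding x_def y_def by (simp add: algebra_simps)
      also have "\<dots> = D * D" using h2[OF that(1)] h2[OF that(2)] h2[OF that(3)]
        unfolding D_def by (simp add: algebra_simps)
      finally show ?thesis .
    qed
    have "(x - y)^2 = (x+y)^2 - 4*(x*y)" by (simp add: power2_eq_square algebra_simps)
    also have "\<dots> = (2*D)^2 - 4*(D*D)" using s p by (simp add: mult.commute)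
    also have "\<dots> = 0" by (simp add: power2_eq_square)
    finally have "(x - y)^2 = 0" .
    hence "x = y" by simp
    thus ?thesis using s unfolding x_def D_def by simp
  qed
  have nz: "A$i$j \<noteq> 0" for i j
  proof (cases "i = j")
    case True thus ?thesis using diag[of i] by simp
  next
    case False
    have "A$i$i * A$j$j > 0" using diag[of i] diag[of j] by (simp add: mult_neg_neg)
    thus ?thesis using h2[OF False] by auto
  qed
  have same: "A$i$j * A$j$i > 0" for i j
  proof (cases "i = j")
    case True thus ?thesis using diag[of i] by (simp add: mult_neg_neg)
  next
    case False
    have "A$i$i * A$j$j > 0" using diag[of i] diag[of j] by (simp add: mult_neg_neg)
    thus ?thesis using h2[OF False] by auto
  qed
  obtain a :: 'n where True by simp
  have key: "A$i$j * A$a$a = A$i$a * A$a$j" for i j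
  proof -
    consider "i = a" | "j = a" | "i = j" "i \<noteq> a" | "i \<noteq> j" "i \<noteq> a" "j \<noteq> a" by blast
    then show ?thesis
    proof cases
      case 1 thus ?thesis by (simp add: mult.commute)
    next
      case 2 thus ?thesis by simp
    next
      case 3 thus ?thesis using h2[of i a] by (simp add: algebra_simps)
    next
      case 4
      have e: "A$i$j * A$j$a * A$a$i = A$i$i * A$j$j * A$a$a" using h3[OF 4] .
      have q: "(A$i$j * A$a$a) * (A$j$a * A$a$i) = (A$i$a * A$a$j) * (A$j$a * A$a$i)"
      proof -
        have "(A$i$j * A$a$a) * (A$j$a * A$a$i) = (A$i$j * A$j$a * A$a$i) * A$a$a"
          by (simp add: algebra_simps)
        also have "\<dots> = (A$i$i * A$a$a) * (A$j$j * A$a$a)" using e by (simp add: algebra_simps)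
        also have "\<dots> = (A$i$a * A$a$i) * (A$a$j * A$j$a)"
          using h2[of i a] h2[of a j] 4 by simp
        finally show ?thesis by (simp add: algebra_simps)
      qed
      have "A$j$a * A$a$i \<noteq> 0" using nz by simp
      thus ?thesis using q by simp
    qed
  qed
  have da: "A$a$a < 0" by (rule diag)
  have conn: "conn_graph_complete A"
    unfolding conn_graph_complete_def conn_edge_def using nz by simp
  have bip: "bipartite_matrix A"
    unfolding bipartite_matrix_def
  proof (intro exI[of _ "{i. A$i$a < 0}"] conjI allI impI)
    fix i j assume H: "i \<in> {i. A$i$a < 0} \<and> j \<notin> {i. A$i$a < 0}"
    have ia: "A$i$a < 0" "A$a$i < 0" using H same[of i a] by (auto simp: zero_less_mult_iff)
    have ja: "A$j$a > 0" "A$a$j > 0" using H same[of j a] nz[of j a] by (auto simp: zero_less_mult_iff)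
    have "A$i$j * A$a$a < 0" using key[of i j] ia ja by (simp add: mult_neg_pos)
    thus "A$i$j \<ge> 0" using da by (auto simp: mult_less_0_iff)
    have "A$j$i * A$a$a < 0" using key[of j i] ia ja by (simp add: mult_pos_neg)
    thus "A$j$i \<ge> 0" using da by (auto simp: mult_less_0_iff)
  next
    fix i j assume H: "(i \<in> {i. A$i$a < 0}) = (j \<in> {i. A$i$a < 0})"
    have s1: "A$i$a * A$a$j > 0"
    proof (cases "A$i$a < 0")
      case True
      hence "A$j$a < 0" using H by simp
      hence "A$a$j < 0" using same[of j a] by (auto simp: zero_less_mult_iff)
      thus ?thesis using True by (simp add: mult_neg_neg)
    next
      case False
      hence "A$i$a > 0" using nz[of i a] by simp
      moreover have "A$j$a > 0" using H False nz[of j a] by simp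
      hence "A$a$j > 0" using same[of j a] by (auto simp: zero_less_mult_iff)
      ultimately show ?thesis by simp
    qed
    have s2: "A$j$a * A$a$i > 0"
    proof (cases "A$j$a < 0")
      case True
      hence "A$i$a < 0" using H by simp
      hence "A$a$i < 0" using same[of i a] by (auto simp: zero_less_mult_iff)
      thus ?thesis using True by (simp add: mult_neg_neg)
    next
      case False
      hence "A$j$a > 0" using nz[of j a] by simp
      moreover have "A$i$a > 0" using H False nz[of i a] by simp
      hence "A$a$i > 0" using same[of i a] by (auto simp: zero_less_mult_iff)
      ultimately show ?thesis by simp
    qed
    have "A$i$j * A$a$a > 0" using key[of i j] s1 by simp
    thus "A$i$j \<le> 0" using da by (auto simp: zero_less_mult_iff)
    have "A$j$i * A$a$a > 0" using key[of j i] s2 by simp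
    thus "A$j$i \<le> 0" using da by (auto simp: zero_less_mult_iff)
  qed
  have rowi: "row i A = (A$i$a / A$a$a) *\<^sub>R row a A" for i
  proof -
    have e: "A$i$j = A$i$a / A$a$a * A$a$j" for j
      using key[of i j] da by (simp add: field_simps)
    show ?thesis unfolding vec_eq_iff row_def
    proof
      fix j show "(\<chi> k. A$i$k) $ j = ((A$i$a / A$a$a) *\<^sub>R (\<chi> k. A$a$k)) $ j"
        using e[of j] by simp
    qed
  qed
  have sub1: "rows A \<subseteq> span {row a A}"
  proof
    fix r assume "r \<in> rows A"
    then obtain i where r: "r = row i A" unfolding rows_def by blast
    show "r \<in> span {row a A}" unfolding r rowi[of i]
      by (intro span_mul span_base) simp
  qed
  have sub2: "{row a A} \<subseteq> span (rows A)"
    unfolding rows_def by (auto intro: span_base)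
  have "span (rows A) = span {row a A}"
    using sub1 sub2 span_eq by blast
  hence "dim (rows A) = dim {row a A}" by (metis dim_span)
  moreover have "row a A \<noteq> 0" using da unfolding vec_eq_iff row_def by (metis less_irrefl vec_lambda_beta zero_index)
  ultimately have "rank A = 1" by (simp add: row_rank_def)
  with conn bip show ?thesis by simp
qed

end
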